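(* Let $\{X_\gamma\}_{\gamma\in\Gamma}$ be a family of strictly convex real Banach spaces such that $|\Gamma|\geq 2$ and, for every $\gamma$, $\dim(X_\gamma)\geq 2$ and $Sm(X_\gamma)$ is norm dense in $S_{X_\gamma}$. Let $Z$ denote either $Z_0=\bigoplus^{c_0}_{\gamma\in\Gamma}X_\gamma$ or $Z_\infty=\bigoplus^{\ell_\infty}_{\gamma\in\Gamma}X_\gamma$. Let $Y$ be a real Banach space and $\Delta:S_Z\to S_Y$ a surjective isometry such that for every $\gamma\in\Gamma$ and $x\in S_{X_\gamma}$ the restriction of $\Delta$ to $A(\gamma,x)$ is affine. Then $$\psi(\Delta(z))=\varphi_x(z(\gamma))$$ for all $\gamma\in\Gamma$, all $x\in Sm(X_\gamma)$, all $\psi\in\mathrm{supp}(\gamma,x)$, and all $z\in S_Z$ such that $\|z(\gamma')\|=1$ for some $\gamma'\neq\gamma$.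
   Context: All Banach spaces are real. $Z_\infty$ is the space of families $z=(z(\gamma))_{\gamma\in\Gamma}$, $z(\gamma)\in X_\gamma$, with $\|z\|=\sup_\gamma\|z(\gamma)\|<\infty$; $Z_0$ is its closed subspace of families with $\{\gamma:\|z(\gamma)\|>\varepsilon\}$ finite for all $\varepsilon>0$. A Banach space is strictly convex if every point of its unit sphere is an extreme point of its closed unit ball. $x\in S_X$ is a smooth point if there is a unique $f\in S_{X^*}$ with $f(x)=1$; $Sm(X)$ is the set of smooth points and, for $x\in Sm(X)$, $\varphi_x$ denotes that unique functional. For $\gamma\in\Gamma$ and $x\in S_{X_\gamma}$, $A(\gamma,x)=\{z\in S_Z: z(\gamma)=x\}$ (a convex set), and $\mathrm{supp}(\gamma,x)=\{\psi\in S_{Y^*}:\psi^{-1}(\{1\})\cap B_Y=\Delta(A(\gamma,x))\}$. "The restriction of $\Delta$ to $A(\gamma,x)$ is affine" means $\Delta(\alpha a+(1-\alpha)b)=\alpha\Delta(a)+(1-\alpha)\Delta(b)$ for all $a,b\in A(\gamma,x)$, $\alpha\in[0,1]$. *)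

theory Defs
  imports "HOL-Analysis.Analysis"
begin

text \<open>Each space X_gamma is modelled as a closed linear subspace V gamma of a common
real Banach space of type 'a (with the inherited norm).\<close>

definition linear_on :: "'a::real_vector set \<Rightarrow> ('a \<Rightarrow> real) \<Rightarrow> bool" where
  "linear_on V f \<longleftrightarrow> (\<forall>x\<in>V. \<forall>y\<in>V. \<forall>a b. f (a *\<^sub>R x + b *\<^sub>R y) = a * f x + b * f y)"

definition dual_sphere :: "'a::real_normed_vector set \<Rightarrow> ('a \<Rightarrow> real) set" where
  "dual_sphere V = {f. linear_on V f \<and> (\<forall>x\<in>V. \<bar>f x\<bar> \<le> norm x)
                      \<and> (SUP x\<in>V \<inter> sphere 0 1. \<bar>f x\<bar>) = 1}"

definition smooth_point :: "'a::real_normed_vector set \<Rightarrow> 'a \<Rightarrow> bool" where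
  "smooth_point V x \<longleftrightarrow> x \<in> V \<inter> sphere 0 1 \<and> (\<exists>f\<in>dual_sphere V. f x = 1) \<and>
     (\<forall>f\<in>dual_sphere V. \<forall>g\<in>dual_sphere V. f x = 1 \<longrightarrow> g x = 1 \<longrightarrow> (\<forall>v\<in>V. f v = g v))"

definition Sm :: "'a::real_normed_vector set \<Rightarrow> 'a set" where
  "Sm V = {x. smooth_point V x}"

definition phi :: "'a::real_normed_vector set \<Rightarrow> 'a \<Rightarrow> ('a \<Rightarrow> real)" where
  "phi V x = (SOME f. f \<in> dual_sphere V \<and> f x = 1)"

definition strictly_convex_sp :: "'a::real_normed_vector set \<Rightarrow> bool" where
  "strictly_convex_sp V \<longleftrightarrow> (\<forall>x\<in>V \<inter> sphere 0 1. x extreme_point_of (V \<inter> cball 0 1))"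

definition supn :: "('g \<Rightarrow> 'a::real_normed_vector) \<Rightarrow> real" where
  "supn z = (SUP g. norm (z g))"

definition Zinf :: "('g \<Rightarrow> 'a::real_normed_vector set) \<Rightarrow> ('g \<Rightarrow> 'a) set" where
  "Zinf V = {z. (\<forall>g. z g \<in> V g) \<and> bdd_above (range (\<lambda>g. norm (z g)))}"

definition Z0 :: "('g \<Rightarrow> 'a::real_normed_vector set) \<Rightarrow> ('g \<Rightarrow> 'a) set" where
  "Z0 V = {z. (\<forall>g. z g \<in> V g) \<and> (\<forall>e>0. finite {g. norm (z g) > e})}"

definition SZ :: "('g \<Rightarrow> 'a::real_normed_vector) set \<Rightarrow> ('g \<Rightarrow> 'a) set" where
  "SZ Z = {z\<in>Z. supn z = 1}"

definition Aset :: "('g \<Rightarrow> 'a::real_normed_vector) set \<Rightarrow> 'g \<Rightarrow> 'a \<Rightarrow> ('g \<Rightarrow> 'a) set" where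
  "Aset Z g x = {z \<in> SZ Z. z g = x}"

definition supp :: "('g \<Rightarrow> 'a::real_normed_vector) set \<Rightarrow> (('g \<Rightarrow> 'a) \<Rightarrow> 'b::real_normed_vector)
     \<Rightarrow> 'g \<Rightarrow> 'a \<Rightarrow> ('b \<Rightarrow> real) set" where
  "supp Z \<Delta> g x = {\<psi>. bounded_linear \<psi> \<and> onorm \<psi> = 1 \<and>
       {y \<in> cball 0 1. \<psi> y = 1} = \<Delta> ` Aset Z g x}"

end

theory Submission
  imports Defs
begin

lemma ext_lemma:
  fixes V :: "'a::real_normed_vector set" and f :: "'a \<Rightarrow> real"
  assumes sub: "subspace V"
   and aff: "\<forall>u\<in>V \<inter> cball 0 1. \<forall>w\<in>V \<inter> cball 0 1. \<forall>\<alpha>\<in>{0..1::real}.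
              f (\<alpha> *\<^sub>R u + (1-\<alpha>) *\<^sub>R w) = \<alpha> * f u + (1-\<alpha>) * f w"
   and bnd: "\<forall>v\<in>V \<inter> cball 0 1. \<bar>f v\<bar> \<le> 1"
   and xV: "x \<in> V" and xn: "norm x = 1" and fx: "f x = 1" and fmx: "f (-x) = -1"
  shows "\<exists>L\<in>dual_sphere V. L x = 1 \<and> (\<forall>v\<in>V \<inter> cball 0 1. L v = f v)"
proof -
  let ?B = "V \<inter> cball 0 1"
  have mid: "f ((1/2) *\<^sub>R u + (1/2) *\<^sub>R w) = (f u + f w) / 2" if "u \<in> ?B" "w \<in> ?B" for u w
  proof -
    have "f ((1/2) *\<^sub>R u + (1 - 1/2) *\<^sub>R w) = (1/2) * f u + (1 - 1/2) * f w"
      using aff that by (intro bspec[OF bspec[OF bspec[OF aff]]]) auto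
    then show ?thesis by simp
  qed
  have mxB: "-x \<in> ?B" "x \<in> ?B" using xV xn sub by (auto simp: subspace_neg)
  have f0: "f 0 = 0"
    using mid[OF mxB(2) mxB(1)] fx fmx by (simp add: scaleR_right_diff_distrib[symmetric])
  have zB: "0 \<in> ?B" using sub by (simp add: subspace_0)
  have s2: "f (t *\<^sub>R v) = t * f v" if "v \<in> ?B" "0 \<le> t" "t \<le> 1" for v t
  proof -
    have "f (t *\<^sub>R v + (1 - t) *\<^sub>R 0) = t * f v + (1 - t) * f 0"
      using that zB by (intro bspec[OF bspec[OF bspec[OF aff]]]) auto
    then show ?thesis using f0 by simp
  qed
  have s3: "f (- v) = - f v" if "v \<in> ?B" for v
  proof -
    have "-v \<in> ?B" using that sub by (auto simp: subspace_neg)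
    from mid[OF that this] f0 show ?thesis by simp
  qed
  have s4: "f (t *\<^sub>R v) = t * f v" if "v \<in> ?B" "\<bar>t\<bar> \<le> 1" for v t
  proof (cases "t \<ge> 0")
    case True then show ?thesis using s2 that by auto
  next
    case False
    have "-v \<in> ?B" using that sub by (auto simp: subspace_neg)
    from s2[OF this, of "-t"] False that s3[OF that(1)] show ?thesis by simp
  qed
  have s5: "f (t *\<^sub>R v) = t * f v" if "v \<in> ?B" "t *\<^sub>R v \<in> ?B" for v t
  proof (cases "\<bar>t\<bar> \<le> 1")
    case True then show ?thesis using s4 that by auto
  next
    case False
    then have t0: "t \<noteq> 0" by auto
    have "f v = (1/t) * f (t *\<^sub>R v)" using s4[OF that(2), of "1/t"] False t0 by simp
    then show ?thesis using t0 by (simp add: field_simps)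
  qed
  have inB: "(1/r) *\<^sub>R v \<in> ?B" if "v \<in> V" "r > 0" "norm v \<le> r" for v r
    using that sub by (auto simp: subspace_scale field_simps)
  define L where "L v = (norm v + 1) * f ((1 / (norm v + 1)) *\<^sub>R v)" for v
  have s7: "L v = r * f ((1/r) *\<^sub>R v)" if "v \<in> V" "r > 0" "norm v \<le> r" for v r
  proof -
    let ?n = "norm v + 1"
    have e: "(1/?n) *\<^sub>R v = (r/?n) *\<^sub>R ((1/r) *\<^sub>R v)" using that by simp
    have np: "?n > 0" "norm v \<le> ?n" using norm_ge_zero[of v] by linarith+
    have nB: "(1/?n) *\<^sub>R v \<in> ?B" using inB[OF that(1) np] .
    have "f ((r/?n) *\<^sub>R ((1/r) *\<^sub>R v)) = (r/?n) * f ((1/r) *\<^sub>R v)"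
      by (rule s5[OF inB[OF that]]) (use e nB in argo)
    then have "f ((1/?n) *\<^sub>R v) = (r/?n) * f ((1/r) *\<^sub>R v)" using e by metis
    then show ?thesis unfolding L_def using np(1) by simp
  qed
  have hom: "L (c *\<^sub>R u) = c * L u" if "u \<in> V" for u c
  proof -
    define r where "r = norm u + norm (c *\<^sub>R u) + 1"
    have r: "r > 0" "norm u \<le> r" "norm (c *\<^sub>R u) \<le> r" using norm_ge_zero[of u] norm_ge_zero[of "c *\<^sub>R u"] unfolding r_def by linarith+
    have cu: "c *\<^sub>R u \<in> V" using that sub by (simp add: subspace_scale)
    have "(1/r) *\<^sub>R (c *\<^sub>R u) = c *\<^sub>R ((1/r) *\<^sub>R u)" by simp
    then have "f ((1/r) *\<^sub>R (c *\<^sub>R u)) = c * f ((1/r) *\<^sub>R u)"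
      using s5[OF inB[OF that r(1,2)], of c] inB[OF cu r(1,3)] by simp
    then show ?thesis using s7[OF that r(1,2)] s7[OF cu r(1,3)] by simp
  qed
  have add: "L (u + w) = L u + L w" if "u \<in> V" "w \<in> V" for u w
  proof -
    define r where "r = norm u + norm w + 1"
    have r: "r > 0" "norm u \<le> r" "norm w \<le> r" "norm (u + w) \<le> r"
      unfolding r_def using norm_triangle_ineq[of u w] norm_ge_zero[of u] norm_ge_zero[of w] by linarith+
    have r5: "norm (u+w) \<le> 2*r" using r by linarith
    have uw: "u + w \<in> V" using that sub by (simp add: subspace_add)
    have B1: "(1/r) *\<^sub>R (u+w) \<in> ?B" using inB[OF uw r(1,4)] .
    have B2: "(1/(2*r)) *\<^sub>R (u+w) \<in> ?B" using inB[OF uw _ r5] r by simp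
    have e1: "(1/r) *\<^sub>R (u+w) = 2 *\<^sub>R ((1/(2*r)) *\<^sub>R (u+w))" by simp
    have e2: "(1/(2*r)) *\<^sub>R (u+w) = (1/2) *\<^sub>R ((1/r) *\<^sub>R u) + (1/2) *\<^sub>R ((1/r) *\<^sub>R w)"
      by (simp only: scaleR_add_right scaleR_scaleR times_divide_eq_left times_divide_eq_right mult_1_left mult_1_right divide_divide_eq_left)
    have "f ((1/r) *\<^sub>R (u+w)) = 2 * f ((1/(2*r)) *\<^sub>R (u+w))"
      using s5[OF B2, of 2] B1 unfolding e1[symmetric] by blast
    also have "\<dots> = f ((1/r) *\<^sub>R u) + f ((1/r) *\<^sub>R w)"
      unfolding e2 using mid[OF inB[OF that(1) r(1,2)] inB[OF that(2) r(1,3)]] by simp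
    finally show ?thesis using s7[OF uw r(1,4)] s7[OF that(1) r(1,2)] s7[OF that(2) r(1,3)]
      by (simp add: algebra_simps)
  qed
  have lin: "linear_on V L" unfolding linear_on_def
    using hom add sub by (simp add: subspace_scale)
  have bd: "\<bar>L v\<bar> \<le> norm v" if "v \<in> V" for v
  proof (cases "v = 0")
    case True then show ?thesis using s7[OF that, of 1] f0 by simp
  next
    case False
    then have "norm v > 0" by simp
    then have "L v = norm v * f ((1/norm v) *\<^sub>R v)" using s7[OF that] by simp
    moreover have "\<bar>f ((1/norm v) *\<^sub>R v)\<bar> \<le> 1" using bnd inB[OF that \<open>norm v > 0\<close>] by auto
    ultimately show ?thesis using \<open>norm v > 0\<close> by (simp add: abs_mult mult_le_cancel_left1)
  qed
  have Lx: "L x = 1" using s7[OF xV, of 1] xn fx by simp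
  have agree: "L v = f v" if "v \<in> ?B" for v using s7[of v 1] that by simp
  have sup: "(SUP v\<in>V \<inter> sphere 0 1. \<bar>L v\<bar>) = 1"
    apply (rule cSup_eq_maximum)
    using Lx xV xn bd by force+
  have "L \<in> dual_sphere V" unfolding dual_sphere_def using lin bd sup by auto
  then show ?thesis using Lx agree by blast
qed

lemma cnorm:
  fixes a b :: "'a::real_normed_vector"
  assumes "0 \<le> \<alpha>" "\<alpha> \<le> 1"
  shows "norm (\<alpha> *\<^sub>R a + (1-\<alpha>) *\<^sub>R b) \<le> \<alpha> * norm a + (1-\<alpha>) * norm b"
  using norm_triangle_ineq[of "\<alpha> *\<^sub>R a" "(1-\<alpha>) *\<^sub>R b"] assms by simp

lemma cnorm_le:
  fixes a b :: "'a::real_normed_vector"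
  assumes "0 \<le> \<alpha>" "\<alpha> \<le> 1" "norm a \<le> M" "norm b \<le> M"
  shows "norm (\<alpha> *\<^sub>R a + (1-\<alpha>) *\<^sub>R b) \<le> M"
proof -
  have "\<alpha> * norm a \<le> \<alpha> * M" "(1-\<alpha>) * norm b \<le> (1-\<alpha>) * M"
    using assms by (auto intro: mult_left_mono)
  then show ?thesis using cnorm[OF assms(1,2), of a b] by (simp add: algebra_simps)
qed

lemma sc_lemma:
  fixes V :: "'a::real_normed_vector set"
  assumes sub: "subspace V" and sc: "strictly_convex_sp V"
    and a: "a \<in> V" "norm a \<le> 1" and x: "x \<in> V" "norm x = 1" and n2: "norm (a + x) = 2"
  shows "a = x"
proof (rule ccontr)
  assume ne: "a \<noteq> x"
  let ?m = "midpoint a x"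
  have mV: "?m \<in> V" unfolding midpoint_def using sub a x
    by (simp add: subspace_add subspace_scale)
  have "norm ?m = 1" unfolding midpoint_def using n2 by simp
  then have "?m extreme_point_of (V \<inter> cball 0 1)" using sc mV unfolding strictly_convex_sp_def by auto
  moreover have "?m \<in> open_segment a x" using ne by simp
  moreover have "a \<in> V \<inter> cball 0 1" "x \<in> V \<inter> cball 0 1" using a x by auto
  ultimately show False unfolding extreme_point_of_def by blast
qed

lemma supn_max:
  assumes "\<And>t. norm (h t) \<le> norm (h t0)"
  shows "supn h = norm (h t0)"
  unfolding supn_def by (rule cSup_eq_maximum) (use assms in auto)

lemma Z_mem:
  assumes "Z = Z0 V \<or> Z = Zinf V" "z \<in> Z"
  shows "z g \<in> V g"
  using assms unfolding Z0_def Zinf_def by auto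

lemma Z_bdd:
  assumes "Z = Z0 V \<or> Z = Zinf V" "z \<in> Z"
  shows "bdd_above (range (\<lambda>g. norm (z g)))"
  using assms(1)
proof
  assume "Z = Z0 V"
  then have fin: "finite {g. norm (z g) > 1}" using assms(2) unfolding Z0_def by auto
  have s1: "range (\<lambda>g. norm (z g)) \<subseteq> (\<lambda>g. norm (z g)) ` {g. norm (z g) > 1} \<union> {..1}" by force
  have s2: "bdd_above ((\<lambda>g. norm (z g)) ` {g. norm (z g) > 1} \<union> {..1})"
    using fin by (simp add: bdd_above_finite)
  show ?thesis by (rule bdd_above_mono[OF s2 s1])
next
  assume "Z = Zinf V" then show ?thesis using assms(2) unfolding Zinf_def by auto
qed

lemma SZ_le1:
  assumes "Z = Z0 V \<or> Z = Zinf V" "z \<in> SZ Z"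
  shows "norm (z g) \<le> 1"
proof -
  have z: "z \<in> Z" "supn z = 1" using assms(2) unfolding SZ_def by auto
  have "norm (z g) \<le> (SUP g. norm (z g))" by (rule cSUP_upper) (use Z_bdd[OF assms(1) z(1)] in auto)
  then show ?thesis using z(2) unfolding supn_def by simp
qed

lemma SZ_intro:
  assumes "w \<in> Z" "\<And>t. norm (w t) \<le> 1" "norm (w t0) = 1"
  shows "w \<in> SZ Z"
  unfolding SZ_def using supn_max[of w t0] assms by auto

lemma Z_upd:
  assumes "Z = Z0 V \<or> Z = Zinf V" "z \<in> Z" "v \<in> V g"
  shows "z(g := v) \<in> Z"
  using assms(1)
proof
  assume Z: "Z = Z0 V"
  have "finite {t. norm ((z(g := v)) t) > e}" if "e > 0" for e
  proof -
    have "finite {t. norm (z t) > e}" using assms(2) Z that unfolding Z0_def by auto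
    moreover have "{t. norm ((z(g := v)) t) > e} \<subseteq> insert g {t. norm (z t) > e}" by auto
    ultimately show ?thesis using finite_subset by blast
  qed
  then show ?thesis using Z assms Z_mem[OF assms(1,2)] unfolding Z0_def by auto
next
  assume Z: "Z = Zinf V"
  have b: "bdd_above (range (\<lambda>g. norm (z g)))" using assms(2) Z unfolding Zinf_def by auto
  have "range (\<lambda>t. norm ((z(g := v)) t)) \<subseteq> insert (norm v) (range (\<lambda>g. norm (z g)))" by auto
  then have "bdd_above (range (\<lambda>t. norm ((z(g := v)) t)))"
    using b by (meson bdd_above_insert bdd_above_mono)
  then show ?thesis using Z assms Z_mem[OF assms(1,2)] unfolding Zinf_def by auto
qed

lemma Z_comb:
  assumes Zc: "Z = Z0 V \<or> Z = Zinf V" and sub: "\<And>g. subspace (V g)"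
    and ab: "a \<in> Z" "b \<in> Z" and al: "0 \<le> \<alpha>" "\<alpha> \<le> 1"
  shows "(\<lambda>t. \<alpha> *\<^sub>R a t + (1 - \<alpha>) *\<^sub>R b t) \<in> Z"
proof -
  have inV: "\<alpha> *\<^sub>R a t + (1 - \<alpha>) *\<^sub>R b t \<in> V t" for t
    using Z_mem[OF Zc ab(1)] Z_mem[OF Zc ab(2)] sub
    by (simp add: subspace_add subspace_scale)
  show ?thesis using Zc
  proof
    assume Z: "Z = Z0 V"
    have "finite {t. norm (\<alpha> *\<^sub>R a t + (1 - \<alpha>) *\<^sub>R b t) > e}" if "e > 0" for e
    proof -
      have "finite {t. norm (a t) > e}" "finite {t. norm (b t) > e}"
        using ab Z that unfolding Z0_def by auto
      moreover have "{t. norm (\<alpha> *\<^sub>R a t + (1 - \<alpha>) *\<^sub>R b t) > e} \<subseteq> {t. norm (a t) > e} \<union> {t. norm (b t) > e}"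
      proof
        fix t assume "t \<in> {t. norm (\<alpha> *\<^sub>R a t + (1 - \<alpha>) *\<^sub>R b t) > e}"
        then have "\<not> (norm (a t) \<le> e \<and> norm (b t) \<le> e)" using cnorm_le[OF al, of "a t" e "b t"] by auto
        then show "t \<in> {t. norm (a t) > e} \<union> {t. norm (b t) > e}" by auto
      qed
      ultimately show ?thesis by (meson finite_UnI finite_subset)
    qed
    then show ?thesis using Z inV unfolding Z0_def by auto
  next
    assume Z: "Z = Zinf V"
    obtain Ma Mb where M: "\<And>t. norm (a t) \<le> Ma" "\<And>t. norm (b t) \<le> Mb"
      using ab Z unfolding Zinf_def bdd_above_def by auto
    have "norm (\<alpha> *\<^sub>R a t + (1 - \<alpha>) *\<^sub>R b t) \<le> max Ma Mb" for t
      using M[of t] by (intro cnorm_le[OF al]) auto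
    then have "bdd_above (range (\<lambda>t. norm (\<alpha> *\<^sub>R a t + (1 - \<alpha>) *\<^sub>R b t)))"
      by (auto intro!: bdd_aboveI)
    then show ?thesis using Z inV unfolding Zinf_def by auto
  qed
qed

theorem proposition3p1:
  fixes V :: "'g \<Rightarrow> 'a::banach set"
    and Z :: "('g \<Rightarrow> 'a) set"
    and \<Delta> :: "('g \<Rightarrow> 'a) \<Rightarrow> 'b::banach"
  assumes Gamma2: "\<exists>a b::'g. a \<noteq> b"
    and subsp: "\<And>g. subspace (V g)" and cl: "\<And>g. closed (V g)"
    and sc: "\<And>g. strictly_convex_sp (V g)"
    and dim2: "\<And>g. \<exists>B. B \<subseteq> V g \<and> independent B \<and> card B = 2"
    and dense: "\<And>g. V g \<inter> sphere 0 1 \<subseteq> closure (Sm (V g))"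
    and Zchoice: "Z = Z0 V \<or> Z = Zinf V"
    and surj: "\<Delta> ` SZ Z = sphere 0 1"
    and isom: "\<forall>z\<in>SZ Z. \<forall>w\<in>SZ Z. dist (\<Delta> z) (\<Delta> w) = supn (\<lambda>g. z g - w g)"
    and aff: "\<And>g x. x \<in> V g \<inter> sphere 0 1 \<Longrightarrow>
       \<forall>a\<in>Aset Z g x. \<forall>b\<in>Aset Z g x. \<forall>\<alpha>\<in>{0..1::real}.
         \<Delta> (\<lambda>t. \<alpha> *\<^sub>R a t + (1 - \<alpha>) *\<^sub>R b t) = \<alpha> *\<^sub>R \<Delta> a + (1 - \<alpha>) *\<^sub>R \<Delta> b"
  shows "\<forall>g x \<psi> z. x \<in> Sm (V g) \<longrightarrow> \<psi> \<in> supp Z \<Delta> g x \<longrightarrow> z \<in> SZ Z \<longrightarrow>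
           (\<exists>g'. g' \<noteq> g \<and> norm (z g') = 1) \<longrightarrow> \<psi> (\<Delta> z) = phi (V g) x (z g)"
proof (intro allI impI)
  fix g x \<psi> z
  assume xs: "x \<in> Sm (V g)" and ps: "\<psi> \<in> supp Z \<Delta> g x" and zS: "z \<in> SZ Z"
    and ex: "\<exists>g'. g' \<noteq> g \<and> norm (z g') = 1"
  obtain g' where g': "g' \<noteq> g" "norm (z g') = 1" using ex by blast
  have smx: "smooth_point (V g) x" using xs unfolding Sm_def by simp
  then have xV: "x \<in> V g" and xn: "norm x = 1" unfolding smooth_point_def by auto
  have mxV: "-x \<in> V g" using xV subsp by (simp add: subspace_neg)
  have mxn: "norm (-x) = 1" using xn by simp
  have bl: "bounded_linear \<psi>" and on: "onorm \<psi> = 1"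
    and face: "{y \<in> cball 0 1. \<psi> y = 1} = \<Delta> ` Aset Z g x"
    using ps unfolding supp_def by auto
  interpret psi: bounded_linear \<psi> by (rule bl)
  have psib: "\<bar>\<psi> y\<bar> \<le> norm y" for y using onorm[OF bl, of y] on by simp
  have Dsph: "norm (\<Delta> u) = 1" if "u \<in> SZ Z" for u using surj that by auto
  have SZZ: "u \<in> Z" if "u \<in> SZ Z" for u using that unfolding SZ_def by auto
  have anti: "\<psi> (\<Delta> u) = -1" if uA: "u \<in> Aset Z g (-x)" for u
  proof -
    have uS: "u \<in> SZ Z" and ug: "u g = -x" using uA unfolding Aset_def by auto
    have "- \<Delta> u \<in> sphere 0 1" using Dsph[OF uS] by simp
    then obtain p where pS: "p \<in> SZ Z" and pD: "\<Delta> p = - \<Delta> u" using surj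
      by (metis imageE)
    have pgx: "p g = x"
    proof (rule ccontr)
      assume ne: "p g \<noteq> x"
      have pgV: "p g \<in> V g" using Z_mem[OF Zchoice SZZ[OF pS]] .
      have pg1: "norm (p g) \<le> 1" using SZ_le1[OF Zchoice pS] .
      have "norm (p g + x) \<le> 2" using norm_triangle_ineq[of "p g" x] pg1 xn by simp
      moreover have "norm (p g + x) \<noteq> 2" using sc_lemma[OF subsp sc pgV pg1 xV xn] ne by blast
      ultimately have lt: "norm (p g + x) < 2" by simp
      define w where "w = p(g := -x)"
      have wZ: "w \<in> Z" unfolding w_def by (rule Z_upd[OF Zchoice SZZ[OF pS] mxV])
      have wS: "w \<in> SZ Z"
        by (rule SZ_intro[OF wZ, of g]) (use SZ_le1[OF Zchoice pS] xn in \<open>auto simp: w_def\<close>)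
      have wA: "w \<in> Aset Z g (-x)" using wS unfolding Aset_def w_def by simp
      define m where "m = (\<lambda>t. (1/2::real) *\<^sub>R u t + (1 - 1/2) *\<^sub>R w t)"
      have mZ: "m \<in> Z" unfolding m_def by (rule Z_comb[OF Zchoice subsp SZZ[OF uS] wZ]) auto
      have mg: "m g = -x" unfolding m_def w_def using ug by (simp add: scaleR_2[symmetric])
      have mS: "m \<in> SZ Z"
      proof (rule SZ_intro[OF mZ, of g])
        fix t show "norm (m t) \<le> 1" unfolding m_def
          by (rule cnorm_le) (use SZ_le1[OF Zchoice uS] SZ_le1[OF Zchoice wS] in auto)
      qed (use mg xn in simp)
      have mD: "\<Delta> m = (1/2::real) *\<^sub>R \<Delta> u + (1 - 1/2) *\<^sub>R \<Delta> w"
      proof -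
        have mxs: "-x \<in> V g \<inter> sphere 0 1" using mxV mxn by simp
        have h: "(1/2::real) \<in> {0..1}" by simp
        show ?thesis unfolding m_def by (rule bspec[OF bspec[OF bspec[OF aff[OF mxs] uA] wA] h])
      qed
      have "norm (\<Delta> m) = 1" using Dsph[OF mS] .
      moreover have "(1/2::real) *\<^sub>R \<Delta> u + (1 - 1/2) *\<^sub>R \<Delta> w = (1/2::real) *\<^sub>R (\<Delta> u + \<Delta> w)"
        by (simp add: scaleR_add_right)
      ultimately have "norm ((1/2::real) *\<^sub>R (\<Delta> u + \<Delta> w)) = 1" using mD by simp
      then have n2: "norm (\<Delta> u + \<Delta> w) = 2" by simp
      have "dist (\<Delta> p) (\<Delta> w) = supn (\<lambda>t. p t - w t)" using isom pS wS by blast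
      also have "\<dots> = norm (p g - w g)"
        by (rule supn_max) (auto simp: w_def)
      also have "\<dots> = norm (p g + x)" by (simp add: w_def)
      finally have "dist (\<Delta> p) (\<Delta> w) < 2" using lt by simp
      moreover have "dist (\<Delta> p) (\<Delta> w) = 2"
      proof -
        have "dist (\<Delta> p) (\<Delta> w) = norm (- \<Delta> u + - \<Delta> w)"
          unfolding pD dist_norm diff_conv_add_uminus ..
        also have "\<dots> = norm (\<Delta> u + \<Delta> w)"
          unfolding minus_add_distrib[symmetric] norm_minus_cancel ..
        finally show ?thesis using n2 by simp
      qed
      ultimately show False by simp
    qed
    have "p \<in> Aset Z g x" using pS pgx unfolding Aset_def by simp
    then have "\<Delta> p \<in> {y \<in> cball 0 1. \<psi> y = 1}" using face by blast
    then have "\<psi> (- \<Delta> u) = 1" using pD by simp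
    then show ?thesis by (simp add: psi.neg)
  qed
  define zv where "zv v = z(g := v)" for v
  define f where "f v = \<psi> (\<Delta> (zv v))" for v
  have zgV: "z g' \<in> V g' \<inter> sphere 0 1" using Z_mem[OF Zchoice SZZ[OF zS]] g' by simp
  have zvS: "zv v \<in> SZ Z" if "v \<in> V g \<inter> cball 0 1" for v
  proof (rule SZ_intro[of _ _ g'])
    show "zv v \<in> Z" unfolding zv_def using Z_upd[OF Zchoice SZZ[OF zS]] that by auto
    show "norm (zv v t) \<le> 1" for t using SZ_le1[OF Zchoice zS] that by (auto simp: zv_def)
    show "norm (zv v g') = 1" using g' by (simp add: zv_def)
  qed
  have zvA: "zv v \<in> Aset Z g' (z g')" if "v \<in> V g \<inter> cball 0 1" for v
    using zvS[OF that] g' unfolding Aset_def by (simp add: zv_def)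
  have faff: "\<forall>u\<in>V g \<inter> cball 0 1. \<forall>w\<in>V g \<inter> cball 0 1. \<forall>\<alpha>\<in>{0..1::real}.
              f (\<alpha> *\<^sub>R u + (1-\<alpha>) *\<^sub>R w) = \<alpha> * f u + (1-\<alpha>) * f w"
  proof (intro ballI)
    fix u w \<alpha> assume u: "u \<in> V g \<inter> cball 0 1" and w: "w \<in> V g \<inter> cball 0 1" and al: "\<alpha> \<in> {0..1::real}"
    have e: "(\<lambda>t. \<alpha> *\<^sub>R zv u t + (1 - \<alpha>) *\<^sub>R zv w t) = zv (\<alpha> *\<^sub>R u + (1-\<alpha>) *\<^sub>R w)"
    proof (rule ext)
      fix t
      have c: "\<alpha> *\<^sub>R z t + (1 - \<alpha>) *\<^sub>R z t = z t"
        by (metis scaleR_collapse add.commute)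
      show "\<alpha> *\<^sub>R zv u t + (1 - \<alpha>) *\<^sub>R zv w t = zv (\<alpha> *\<^sub>R u + (1-\<alpha>) *\<^sub>R w) t"
      proof (cases "t = g")
        case True then show ?thesis by (simp add: zv_def)
      next
        case False show ?thesis unfolding zv_def fun_upd_other[OF False] by (rule c)
      qed
    qed
    have "\<Delta> (\<lambda>t. \<alpha> *\<^sub>R zv u t + (1 - \<alpha>) *\<^sub>R zv w t) = \<alpha> *\<^sub>R \<Delta> (zv u) + (1 - \<alpha>) *\<^sub>R \<Delta> (zv w)"
      using aff[OF zgV] zvA[OF u] zvA[OF w] al by blast
    then have "\<Delta> (zv (\<alpha> *\<^sub>R u + (1-\<alpha>) *\<^sub>R w)) = \<alpha> *\<^sub>R \<Delta> (zv u) + (1 - \<alpha>) *\<^sub>R \<Delta> (zv w)"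
      unfolding e .
    then show "f (\<alpha> *\<^sub>R u + (1-\<alpha>) *\<^sub>R w) = \<alpha> * f u + (1-\<alpha>) * f w"
      unfolding f_def by (simp add: psi.add psi.scaleR)
  qed
  have fbnd: "\<forall>v\<in>V g \<inter> cball 0 1. \<bar>f v\<bar> \<le> 1"
    unfolding f_def using psib Dsph zvS by (metis)
  have xB: "x \<in> V g \<inter> cball 0 1" "-x \<in> V g \<inter> cball 0 1" using xV xn mxV by auto
  have fx: "f x = 1"
  proof -
    have "zv x \<in> Aset Z g x" using zvS[OF xB(1)] unfolding Aset_def by (simp add: zv_def)
    then have "\<Delta> (zv x) \<in> {y \<in> cball 0 1. \<psi> y = 1}" using face by blast
    then show ?thesis unfolding f_def by simp
  qed
  have fmx: "f (-x) = -1"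
  proof -
    have "zv (-x) \<in> Aset Z g (-x)" using zvS[OF xB(2)] unfolding Aset_def by (simp add: zv_def)
    then show ?thesis unfolding f_def by (rule anti)
  qed
  obtain L where L: "L \<in> dual_sphere (V g)" "L x = 1" "\<forall>v\<in>V g \<inter> cball 0 1. L v = f v"
    using ext_lemma[OF subsp faff fbnd xV xn fx fmx] by blast
  have "\<exists>h. h \<in> dual_sphere (V g) \<and> h x = 1" using smx unfolding smooth_point_def by blast
  then have ph: "phi (V g) x \<in> dual_sphere (V g)" "phi (V g) x x = 1"
    unfolding phi_def by (metis (mono_tags, lifting) someI_ex)+
  have zgB: "z g \<in> V g \<inter> cball 0 1" using Z_mem[OF Zchoice SZZ[OF zS]] SZ_le1[OF Zchoice zS] by simp
  have "phi (V g) x (z g) = L (z g)" using smx ph L(1,2) zgB unfolding smooth_point_def by blast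
  also have "\<dots> = f (z g)" using L(3) zgB by blast
  also have "\<dots> = \<psi> (\<Delta> z)" unfolding f_def zv_def by simp
  finally show "\<psi> (\<Delta> z) = phi (V g) x (z g)" by simp
qed

end
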